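(* Let $E$ be a nonempty closed convex subset of a real Hilbert space $H$. Let $f:E\times E\to\mathbb{R}$ be a bifunction satisfying conditions (A1)–(A4) below, and let $S:E\to E$ be a $(\lambda,\gamma)$-generalized hybrid mapping for some $\lambda,\gamma\in\mathbb{R}$, with $F(S)\cap EP(f)\neq\emptyset$. Let $\{r_n\}\subset(0,\infty)$ satisfy $\liminf_{n\to\infty}r_n>0$ and let $\{\beta_n\}$ be a sequence in $[b,1]$ for some $b\in(0,1)$ with $\liminf_{n\to\infty}\beta_n(1-\beta_n)>0$. Let $\{x_n\}$ and $\{u_n\}$ be generated by $x_1=x\in E$ and, for all $n\in\mathbb{N}$, $$u_n\in E \text{ such that } f(u_n,y)+\frac{1}{r_n}\langle y-u_n,u_n-x_n\rangle\ge 0\quad\text{for all } y\in E,$$ $$x_{n+1}=S\big((1-\beta_n)x_n+\beta_n Su_n\big).$$ Then $\{x_n\}$ converges weakly to a point $v\in F(S)\cap EP(f)$, where $v=\lim_{n\to\infty}P_{F(S)\cap EP(f)}(x_n)$.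
   Context: $F(S)=\{x\in E: Sx=x\}$. A mapping $S:E\to E$ is $(\lambda,\gamma)$-generalized hybrid if $\lambda\|Sx-Sy\|^2+(1-\lambda)\|x-Sy\|^2\le \gamma\|Sx-y\|^2+(1-\gamma)\|x-y\|^2$ for all $x,y\in E$. $EP(f)=\{x\in E: f(x,y)\ge 0 \text{ for all } y\in E\}$. Conditions: (A1) $f(x,x)=0$ for all $x\in E$; (A2) $f(x,y)+f(y,x)\le 0$ for all $x,y\in E$; (A3) for all $x,y,z\in E$, $\lim_{t\downarrow 0} f(tz+(1-t)x,y)\le f(x,y)$; (A4) for each $x\in E$, $y\mapsto f(x,y)$ is convex and lower semicontinuous. $P_K$ is the metric projection of $H$ onto a nonempty closed convex set $K$; the limit defining $v$ is in norm. *)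

theory Defs
  imports "HOL-Analysis.Analysis"
begin

definition fixset :: "'a set \<Rightarrow> ('a \<Rightarrow> 'a) \<Rightarrow> 'a set" where
  "fixset E S = {x \<in> E. S x = x}"

definition gen_hybrid :: "'a::real_inner set \<Rightarrow> real \<Rightarrow> real \<Rightarrow> ('a \<Rightarrow> 'a) \<Rightarrow> bool" where
  "gen_hybrid E lam gam S \<longleftrightarrow>
     (\<forall>x\<in>E. \<forall>y\<in>E. lam * (norm (S x - S y))\<^sup>2 + (1 - lam) * (norm (x - S y))\<^sup>2
                 \<le> gam * (norm (S x - y))\<^sup>2 + (1 - gam) * (norm (x - y))\<^sup>2)"

definition EP :: "'a set \<Rightarrow> ('a \<Rightarrow> 'a \<Rightarrow> real) \<Rightarrow> 'a set" where
  "EP E f = {x \<in> E. \<forall>y\<in>E. f x y \<ge> 0}"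

definition lsc_on :: "'a::topological_space set \<Rightarrow> ('a \<Rightarrow> real) \<Rightarrow> bool" where
  "lsc_on E g \<longleftrightarrow> (\<forall>a. openin (top_of_set E) {y \<in> E. a < g y})"

definition metric_proj :: "'a::real_inner set \<Rightarrow> 'a \<Rightarrow> 'a" where
  "metric_proj K x = (SOME p. p \<in> K \<and> (\<forall>y\<in>K. dist x p \<le> dist x y))"

definition weak_conv :: "(nat \<Rightarrow> 'a::real_inner) \<Rightarrow> 'a \<Rightarrow> bool" where
  "weak_conv x v \<longleftrightarrow> (\<forall>y. (\<lambda>n. inner (x n) y) \<longlonglongrightarrow> inner v y)"

end

theory Submission
  imports Defs "HOL-Library.Diagonal_Subsequence"
begin

lemma norm_comb_id:
  fixes a b :: "'a::real_inner"
  shows "(norm (t *\<^sub>R a + (1 - t) *\<^sub>R b))\<^sup>2 = t * (norm a)\<^sup>2 + (1-t) * (norm b)\<^sup>2 - t*(1-t)*(norm (a-b))\<^sup>2"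
  by (simp add: power2_norm_eq_inner inner_add_left inner_add_right inner_diff_left inner_diff_right inner_commute algebra_simps)

lemma aux_lin: "(n::real) \<le> 2*A + 2*B - 4*D \<Longrightarrow> A \<le> X \<Longrightarrow> B \<le> X \<Longrightarrow> n \<le> 4*(X - D)"
  unfolding right_diff_distrib by linarith

lemma proj_exists:
  fixes C :: "'a::{real_inner,complete_space} set"
  assumes "closed C" "convex C" "C \<noteq> {}"
  shows "\<exists>p\<in>C. \<forall>q\<in>C. dist a p \<le> dist a q"
proof -
  define d where "d = Inf (dist a ` C)"
  have bdd: "bdd_below (dist a ` C)" by (auto intro: bdd_belowI[of _ 0])
  have d_le: "\<And>q. q\<in>C \<Longrightarrow> d \<le> dist a q" using bdd by (auto simp: d_def intro: cInf_lower)
  have d0: "0 \<le> d" using assms(3) by (auto simp: d_def intro!: cInf_greatest)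
  have "\<forall>n. \<exists>q\<in>C. dist a q < d + 1/(Suc n)"
  proof
    fix n
    have "Inf (dist a ` C) < d + 1/Suc n" by (simp add: d_def)
    then show "\<exists>q\<in>C. dist a q < d + 1/(Suc n)" using cInf_lessD[of "dist a ` C"] assms(3) by auto
  qed
  then obtain q where q: "\<And>n. q n \<in> C" "\<And>n. dist a (q n) < d + 1/Suc n" by metis
  have par: "(norm (q n - q m))\<^sup>2 \<le> 2*(dist a (q n))\<^sup>2 + 2*(dist a (q m))\<^sup>2 - 4*d\<^sup>2" for n m
  proof -
    have mid: "(1/2) *\<^sub>R q n + (1 - 1/2) *\<^sub>R q m \<in> C"
      using assms(2) q(1) by (intro convexD) auto
    have "d \<le> norm ((1/2) *\<^sub>R (a - q n) + (1 - 1/2) *\<^sub>R (a - q m))"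
    proof -
      have h: "(1/2::real) *\<^sub>R a + (1/2) *\<^sub>R a = a" by (metis scaleR_add_left field_sum_of_halves scaleR_one)
      have "(1/2::real) *\<^sub>R (a - q n) + (1 - 1/2) *\<^sub>R (a - q m) = a - ((1/2) *\<^sub>R q n + (1 - 1/2) *\<^sub>R q m)"
        using h by (simp add: algebra_simps)
      thus ?thesis using d_le[OF mid] by (simp add: dist_norm)
    qed
    hence "d\<^sup>2 \<le> (norm ((1/2) *\<^sub>R (a - q n) + (1 - 1/2) *\<^sub>R (a - q m)))\<^sup>2"
      using d0 power_mono by blast
    also have "\<dots> = (1/2)*(norm (a - q n))\<^sup>2 + (1/2)*(norm (a - q m))\<^sup>2 - (1/4)*(norm (q n - q m))\<^sup>2"
      by (subst norm_comb_id) (simp add: norm_minus_commute)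
    finally show ?thesis by (simp add: dist_norm)
  qed
  have "Cauchy q"
  proof (rule CauchyI)
    fix e :: real assume e: "e > 0"
    define \<delta> where "\<delta> = min 1 (e\<^sup>2 / (8*(2*d+1)))"
    have \<delta>: "\<delta> > 0" using e d0 by (auto simp: \<delta>_def)
    obtain N where N: "N \<noteq> 0" "inverse (real N) < \<delta>" using real_arch_inverse \<delta> by blast
    show "\<exists>M. \<forall>m\<ge>M. \<forall>n\<ge>M. norm (q m - q n) < e"
    proof (intro exI allI impI)
      fix m n assume mn: "N \<le> m" "N \<le> n"
      have b: "dist a (q k) < d + \<delta>" if "N \<le> k" for k
      proof -
        have "1/real (Suc k) \<le> inverse (real N)" using that N(1)
          by (simp add: divide_simps)
        thus ?thesis using q(2)[of k] N(2) by linarith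
      qed
      have bb: "(dist a (q k))\<^sup>2 \<le> (d+\<delta>)\<^sup>2" if "N \<le> k" for k
        using b[OF that] by (intro power_mono) auto
      have "(norm (q m - q n))\<^sup>2 \<le> 4*((d+\<delta>)\<^sup>2 - d\<^sup>2)" using par[of m n] bb[OF mn(1)] bb[OF mn(2)] aux_lin by blast
      also have "\<dots> = 4*\<delta>*(2*d+\<delta>)" by (simp add: power2_eq_square algebra_simps)
      also have "\<dots> \<le> 4*\<delta>*(2*d+1)" using \<delta> by (simp add: \<delta>_def)
      also have "\<dots> \<le> e\<^sup>2/2"
      proof -
        have "\<delta> \<le> e\<^sup>2 / (8*(2*d+1))" by (simp add: \<delta>_def)
        thus ?thesis using d0 by (simp add: field_simps)
      qed
      also have "\<dots> < e\<^sup>2" using e by simp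
      finally have "(norm (q m - q n))\<^sup>2 < e\<^sup>2" .
      thus "norm (q m - q n) < e"
        by (rule power_less_imp_less_base) (use e in simp)
    qed
  qed
  then obtain p where p: "q \<longlonglongrightarrow> p" using Cauchy_convergent convergent_def by blast
  have pC: "p \<in> C" using assms(1) q(1) p closed_sequential_limits by blast
  have l1: "(\<lambda>n. dist a (q n)) \<longlonglongrightarrow> dist a p" by (intro tendsto_intros p)
  have l2: "(\<lambda>n. dist a (q n)) \<longlonglongrightarrow> d"
  proof (rule tendsto_sandwich[of "\<lambda>n. d" _ _ "\<lambda>n. d + 1/Suc n"])
    show "\<forall>\<^sub>F n in sequentially. d \<le> dist a (q n)" using d_le q(1) by (intro always_eventually) blast
    show "\<forall>\<^sub>F n in sequentially. dist a (q n) \<le> d + 1/Suc n" using q(2) less_imp_le by (intro always_eventually) blast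
    show "(\<lambda>n. d + 1 / real (Suc n)) \<longlonglongrightarrow> d"
      using tendsto_add[OF tendsto_const[of d] LIMSEQ_Suc[OF lim_inverse_n']] by simp
  qed auto
  have "dist a p = d" using LIMSEQ_unique[OF l1 l2] .
  thus ?thesis using pC d_le by auto
qed

lemma norm_sub_scale: "(norm (x - t *\<^sub>R w))\<^sup>2 = (norm x)\<^sup>2 - 2*t*inner x w + t*(t*inner w (w::'a::real_inner))"
  by (simp add: power2_norm_eq_inner inner_diff_left inner_diff_right inner_commute algebra_simps)

lemma proj_var:
  fixes a p q :: "'a::real_inner"
  assumes "convex C" "p \<in> C" "\<forall>q\<in>C. dist a p \<le> dist a q" "q \<in> C"
  shows "inner (a - p) (q - p) \<le> 0"
proof (rule ccontr)
  assume "\<not> ?thesis"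
  hence s: "inner (a - p) (q - p) > 0" by simp
  define w where "w = q - p"
  define sv where "sv = inner (a - p) w"
  have s0: "sv > 0" using s by (simp add: sv_def w_def)
  have w0: "w \<noteq> 0" using s0 by (auto simp: sv_def)
  have nw: "inner w w > 0" using w0 by simp
  define t where "t = min 1 (sv / inner w w)"
  have t0: "t > 0" "t \<le> 1" using s0 nw by (auto simp: t_def)
  have tw: "t * inner w w \<le> sv"
  proof (cases "sv / inner w w \<le> 1")
    case True then show ?thesis using nw by (simp add: t_def min_def)
  next
    case False then show ?thesis using nw by (simp add: t_def min_def field_simps)
  qed
  have inC: "p + t *\<^sub>R w \<in> C"
  proof -
    have "(1 - t) *\<^sub>R p + t *\<^sub>R q \<in> C" using assms(1,2,4) t0 by (intro convexD) auto
    moreover have "(1 - t) *\<^sub>R p + t *\<^sub>R q = p + t *\<^sub>R w" by (simp add: w_def algebra_simps)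
    ultimately show ?thesis by simp
  qed
  have "(dist a p)\<^sup>2 \<le> (dist a (p + t *\<^sub>R w))\<^sup>2"
    using assms(3) inC by (simp add: power_mono)
  also have "(dist a (p + t *\<^sub>R w))\<^sup>2 = (dist a p)\<^sup>2 - 2 * t * sv + t * (t * inner w w)"
  proof -
    have "a - (p + t *\<^sub>R w) = (a - p) - t *\<^sub>R w" by simp
    thus ?thesis by (simp only: dist_norm norm_sub_scale sv_def)
  qed
  also have "\<dots> \<le> (dist a p)\<^sup>2 - 2 * t * sv + t * sv" using tw t0 by (simp add: mult_left_mono)
  finally have "t * sv \<le> 0" by (simp add: mult.commute)
  thus False using t0 s0 by (simp add: mult_le_0_iff)
qed

lemma proj_orth:
  fixes a p v :: "'a::real_inner"
  assumes "subspace V" "p \<in> V" "\<forall>q\<in>V. dist a p \<le> dist a q" "v \<in> V"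
  shows "inner (a - p) v = 0"
proof -
  have c: "convex V" using assms(1) subspace_imp_convex by blast
  have "p + v \<in> V" "p - v \<in> V" using assms by (auto intro: subspace_add subspace_diff)
  from proj_var[OF c assms(2,3) this(1)] proj_var[OF c assms(2,3) this(2)]
  show ?thesis by (simp add: inner_diff_right)
qed

lemma weak_conv_inner_strong:
  fixes w :: "nat \<Rightarrow> 'a::real_inner"
  assumes "weak_conv w z" "\<And>k. norm (w k) \<le> M" "q \<longlonglongrightarrow> q0"
  shows "(\<lambda>k. inner (w k) (q k)) \<longlonglongrightarrow> inner z q0"
proof -
  have a: "(\<lambda>k. inner (w k) q0) \<longlonglongrightarrow> inner z q0" using assms(1) by (simp add: weak_conv_def)
  have "(\<lambda>k. inner (w k) (q k - q0)) \<longlonglongrightarrow> 0"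
  proof (rule Lim_null_comparison[where g="\<lambda>k. M * norm (q k - q0)"])
    show "\<forall>\<^sub>F k in sequentially. norm (inner (w k) (q k - q0)) \<le> M * norm (q k - q0)"
      using assms(2) by (intro always_eventually allI, simp only: real_norm_def)
        (meson Cauchy_Schwarz_ineq2 mult_right_mono norm_ge_zero order_trans)
    have "(\<lambda>k. q k - q0) \<longlonglongrightarrow> 0" using assms(3) by (simp add: LIM_zero)
    hence "(\<lambda>k. norm (q k - q0)) \<longlonglongrightarrow> 0" by (simp add: tendsto_norm_zero)
    thus "(\<lambda>k. M * norm (q k - q0)) \<longlonglongrightarrow> 0" using tendsto_mult_right_zero by blast
  qed
  from tendsto_add[OF a this] show ?thesis by (simp add: inner_diff_right)
qed

lemma strong_imp_weak: "x \<longlonglongrightarrow> z \<Longrightarrow> weak_conv x z"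
  unfolding weak_conv_def by (auto intro: tendsto_intros)

lemma weak_conv_add_null:
  assumes "weak_conv a z" "(\<lambda>n. b n - a n) \<longlonglongrightarrow> 0"
  shows "weak_conv b z"
  unfolding weak_conv_def
proof
  fix y
  have "(\<lambda>n. inner (a n) y + inner (b n - a n) y) \<longlonglongrightarrow> inner z y + inner 0 y"
    using assms(1) tendsto_inner[OF assms(2) tendsto_const[of y]] by (intro tendsto_add) (auto simp: weak_conv_def)
  thus "(\<lambda>n. inner (b n) y) \<longlonglongrightarrow> inner z y" by (simp add: inner_diff_left)
qed

lemma weak_conv_subseq: "weak_conv x z \<Longrightarrow> strict_mono \<sigma> \<Longrightarrow> weak_conv (x \<circ> \<sigma>) z"
  unfolding weak_conv_def using LIMSEQ_subseq_LIMSEQ by (fastforce simp: o_def)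

lemma weak_closed:
  fixes C :: "'a::{real_inner,complete_space} set"
  assumes "closed C" "convex C" "weak_conv w z" "eventually (\<lambda>k. w k \<in> C) sequentially"
  shows "z \<in> C"
proof -
  have ne: "C \<noteq> {}" using assms(4) by (auto simp: eventually_sequentially)
  obtain p where p: "p \<in> C" "\<forall>q\<in>C. dist z p \<le> dist z q" using proj_exists[OF assms(1,2) ne] by blast
  have ev: "eventually (\<lambda>k. inner (w k - p) (z - p) \<le> 0) sequentially"
    using assms(4) proof (rule eventually_mono)
    fix k assume "w k \<in> C"
    from proj_var[OF assms(2) p this] show "inner (w k - p) (z - p) \<le> 0" by (simp add: inner_commute)
  qed
  have "(\<lambda>k. inner (w k) (z - p) - inner p (z - p)) \<longlonglongrightarrow> inner z (z - p) - inner p (z - p)"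
    using assms(3) by (intro tendsto_diff tendsto_const) (auto simp: weak_conv_def)
  hence "(\<lambda>k. inner (w k - p) (z - p)) \<longlonglongrightarrow> inner (z - p) (z - p)" by (simp add: inner_diff_left)
  hence "inner (z - p) (z - p) \<le> 0" using ev by (intro tendsto_upperbound) auto
  hence "z = p" by (metis inner_ge_zero order_antisym inner_eq_zero_iff right_minus_eq)
  thus ?thesis using p by simp
qed

lemma riesz:
  fixes L :: "'a::{real_inner,complete_space} \<Rightarrow> real"
  assumes add: "\<And>a b. L (a + b) = L a + L b" and sc: "\<And>c a. L (c *\<^sub>R a) = c * L a"
    and bd: "\<And>a. \<bar>L a\<bar> \<le> M * norm a"
  shows "\<exists>z. \<forall>y. L y = inner z y"
proof (cases "\<forall>y. L y = 0")
  case True thus ?thesis by (intro exI[of _ 0]) simp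
next
  case False
  then obtain a where a: "L a \<noteq> 0" by blast
  define K where "K = {y. L y = 0}"
  have L0: "L 0 = 0" using sc[of 0 0] by simp
  have Ldiff: "L (u - v) = L u - L v" for u v using add[of u "-v"] sc[of "-1" v] by simp
  have subK: "subspace K" unfolding subspace_def K_def by (simp add: add sc L0)
  have clK: "closed K"
    unfolding closed_sequential_limits
  proof (intro allI impI, elim conjE)
    fix ys l assume ys: "\<forall>n. ys n \<in> K" "ys \<longlonglongrightarrow> l"
    have "(\<lambda>n. l - ys n) \<longlonglongrightarrow> 0" using tendsto_diff[OF tendsto_const[of l] ys(2)] by simp
    hence "(\<lambda>n. M * norm (l - ys n)) \<longlonglongrightarrow> 0" using tendsto_mult_right_zero tendsto_norm_zero by blast
    moreover have "\<bar>L l\<bar> \<le> M * norm (l - ys n)" for n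
      using bd[of "l - ys n"] ys(1) by (simp add: Ldiff K_def)
    ultimately have "\<bar>L l\<bar> \<le> 0" by (intro tendsto_lowerbound[of "\<lambda>n. M * norm (l - ys n)"]) auto
    thus "l \<in> K" by (simp add: K_def)
  qed
  have neK: "K \<noteq> {}" using L0 by (auto simp: K_def)
  obtain p where p: "p \<in> K" "\<forall>q\<in>K. dist a p \<le> dist a q"
    using proj_exists[OF clK subspace_imp_convex[OF subK] neK] by blast
  define w where "w = a - p"
  have Lw: "L w = L a" using p(1) by (simp add: w_def Ldiff K_def)
  have w0: "w \<noteq> 0" using Lw a L0 by auto
  have orth: "inner w v = 0" if "v \<in> K" for v using proj_orth[OF subK p that] by (simp add: w_def)
  show ?thesis
  proof (intro exI allI)
    fix y
    have "y - (L y / L w) *\<^sub>R w \<in> K" using a Lw by (simp add: K_def Ldiff sc)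
    from orth[OF this] have "inner w y = (L y / L w) * inner w w" by (simp add: inner_diff_right)
    moreover have "inner w w \<noteq> 0" using w0 by simp
    ultimately show "L y = inner ((L w / inner w w) *\<^sub>R w) y" using a Lw by (simp add: field_simps)
  qed
qed

lemma weak_compact:
  fixes x :: "nat \<Rightarrow> 'a::{real_inner,complete_space}"
  assumes M: "\<And>n. norm (x n) \<le> M"
  shows "\<exists>\<sigma> z. strict_mono \<sigma> \<and> weak_conv (x \<circ> \<sigma>) z"
proof -
  have M0: "0 \<le> M" using M[of 0] norm_ge_zero[of "x 0"] by linarith
  have bnd: "\<bar>inner (x k) y\<bar> \<le> M * norm y" for k y
    using Cauchy_Schwarz_ineq2[of "x k" y] M[of k] by (meson mult_right_mono norm_ge_zero order_trans)
  interpret s: subseqs "\<lambda>n s. convergent (\<lambda>k. inner (x (s k)) (x n))"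
  proof
    fix n and s :: "nat \<Rightarrow> nat" assume "strict_mono s"
    have "bounded (range (\<lambda>k. inner (x (s k)) (x n)))"
      unfolding bounded_iff using bnd by (intro exI[of _ "M * norm (x n)"]) auto
    then obtain l r where "strict_mono r" "((\<lambda>k. inner (x (s k)) (x n)) \<circ> r) \<longlonglongrightarrow> l"
      using bounded_imp_convergent_subsequence by blast
    then show "\<exists>r'. strict_mono r' \<and> convergent (\<lambda>k. inner (x ((s \<circ> r') k)) (x n))"
      by (auto simp: convergent_def o_def)
  qed
  define \<sigma> where "\<sigma> = s.diagseq"
  have mono: "strict_mono \<sigma>" using s.subseq_diagseq by (simp add: \<sigma>_def)
  have conv_xn: "convergent (\<lambda>k. inner (x (\<sigma> k)) (x n))" for n
  proof -
    have "convergent (\<lambda>k. inner (x ((s.diagseq \<circ> (+) (Suc n)) k)) (x n))"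
    proof (rule s.diagseq_holds)
      fix r s' :: "nat \<Rightarrow> nat" and n' assume "strict_mono r" "convergent (\<lambda>k. inner (x (s' k)) (x n'))"
      then show "convergent (\<lambda>k. inner (x ((s' \<circ> r) k)) (x n'))"
        using LIMSEQ_subseq_LIMSEQ by (fastforce simp: convergent_def o_def)
    qed
    then obtain l where "(\<lambda>k. inner (x (\<sigma> (k + Suc n))) (x n)) \<longlonglongrightarrow> l"
      by (auto simp: convergent_def o_def \<sigma>_def add.commute)
    then have "(\<lambda>k. inner (x (\<sigma> k)) (x n)) \<longlonglongrightarrow> l"
      by (rule LIMSEQ_offset[where k="Suc n"])
    then show ?thesis by (auto simp: convergent_def)
  qed
  define V where "V = {y. convergent (\<lambda>k. inner (x (\<sigma> k)) y)}"
  have subV: "subspace V"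
    unfolding subspace_def V_def
  proof (intro conjI ballI allI; simp only: mem_Collect_eq)
    show "convergent (\<lambda>k. inner (x (\<sigma> k)) 0)" by (simp add: convergent_const)
    fix a b assume "convergent (\<lambda>k. inner (x (\<sigma> k)) a)" "convergent (\<lambda>k. inner (x (\<sigma> k)) b)"
    then show "convergent (\<lambda>k. inner (x (\<sigma> k)) (a + b))" by (simp add: inner_add_right convergent_add)
  next
    fix c and a assume "convergent (\<lambda>k. inner (x (\<sigma> k)) a)"
    then show "convergent (\<lambda>k. inner (x (\<sigma> k)) (c *\<^sub>R a))"
      by (auto simp: convergent_def intro: tendsto_mult_left)
  qed
  have clV: "closed V"
    unfolding closed_sequential_limits
  proof (intro allI impI, elim conjE)
    fix ys l assume ys: "\<forall>n. ys n \<in> V" "ys \<longlonglongrightarrow> l"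
    show "l \<in> V" unfolding V_def mem_Collect_eq Cauchy_convergent_iff[symmetric]
    proof (rule CauchyI)
      fix e :: real assume e: "e > 0"
      define \<epsilon> where "\<epsilon> = e / (4 * (M + 1))"
      have \<epsilon>: "\<epsilon> > 0" using e M0 by (simp add: \<epsilon>_def)
      obtain j where j: "norm (ys j - l) < \<epsilon>"
        using ys(2) \<epsilon> unfolding LIMSEQ_iff by blast
      have "Cauchy (\<lambda>k. inner (x (\<sigma> k)) (ys j))" using ys(1) by (simp add: V_def Cauchy_convergent_iff)
      then obtain N where N: "\<forall>m\<ge>N. \<forall>n\<ge>N. norm (inner (x (\<sigma> m)) (ys j) - inner (x (\<sigma> n)) (ys j)) < e/2"
        using e unfolding Cauchy_iff by (meson half_gt_zero)
      have Me: "M * \<epsilon> < e/4"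
      proof -
        have "M * \<epsilon> = e/4 * (M / (M+1))" using M0 by (simp add: \<epsilon>_def field_simps)
        also have "\<dots> < e/4 * 1" using e M0 by (intro mult_strict_left_mono) auto
        finally show ?thesis by simp
      qed
      have sm: "\<bar>inner (x (\<sigma> k)) (ys j - l)\<bar> \<le> M * \<epsilon>" for k
        using bnd[of "\<sigma> k" "ys j - l"] j M0 by (meson less_imp_le mult_left_mono order_trans)
      show "\<exists>M. \<forall>m\<ge>M. \<forall>n\<ge>M. norm (inner (x (\<sigma> m)) l - inner (x (\<sigma> n)) l) < e"
      proof (intro exI allI impI)
        fix m n assume mn: "N \<le> m" "N \<le> n"
        have eq: "inner (x (\<sigma> m)) l - inner (x (\<sigma> n)) l = (inner (x (\<sigma> m)) (ys j) - inner (x (\<sigma> n)) (ys j)) - inner (x (\<sigma> m)) (ys j - l) + inner (x (\<sigma> n)) (ys j - l)"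
          by (simp add: inner_diff_right)
        have "norm (inner (x (\<sigma> m)) (ys j) - inner (x (\<sigma> n)) (ys j)) < e/2" using N mn by blast
        then show "norm (inner (x (\<sigma> m)) l - inner (x (\<sigma> n)) l) < e"
          unfolding eq real_norm_def using sm[of m] sm[of n] Me by linarith
      qed
    qed
  qed
  have allV: "y \<in> V" for y
  proof -
    have neV: "V \<noteq> {}" using subV subspace_0 by blast
    obtain p where p: "p \<in> V" "\<forall>q\<in>V. dist y p \<le> dist y q"
      using proj_exists[OF clV subspace_imp_convex[OF subV] neV] by blast
    have xV: "x n \<in> V" for n using conv_xn by (simp add: V_def)
    have "inner (x (\<sigma> k)) (y - p) = 0" for k using proj_orth[OF subV p xV[of "\<sigma> k"]] by (simp add: inner_commute)
    hence "y - p \<in> V" by (simp add: V_def convergent_const)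
    hence "p + (y - p) \<in> V" using subV p(1) subspace_add by blast
    thus ?thesis by simp
  qed
  define L where "L y = lim (\<lambda>k. inner (x (\<sigma> k)) y)" for y
  have Lt: "(\<lambda>k. inner (x (\<sigma> k)) y) \<longlonglongrightarrow> L y" for y
    using allV[of y] by (simp add: V_def L_def convergent_LIMSEQ_iff)
  have Ladd: "L (a + b) = L a + L b" for a b
  proof -
    have "(\<lambda>k. inner (x (\<sigma> k)) (a + b)) \<longlonglongrightarrow> L a + L b"
      using tendsto_add[OF Lt[of a] Lt[of b]] by (simp add: inner_add_right)
    from LIMSEQ_unique[OF Lt this] show ?thesis .
  qed
  have Lsc: "L (c *\<^sub>R a) = c * L a" for c a
  proof -
    have "(\<lambda>k. inner (x (\<sigma> k)) (c *\<^sub>R a)) \<longlonglongrightarrow> c * L a"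
      using tendsto_mult_left[OF Lt[of a], of c] by simp
    from LIMSEQ_unique[OF Lt this] show ?thesis .
  qed
  have Lbd: "\<bar>L a\<bar> \<le> M * norm a" for a
    using tendsto_rabs[OF Lt[of a]] bnd by (intro tendsto_upperbound[of "\<lambda>k. \<bar>inner (x (\<sigma> k)) a\<bar>"]) auto
  obtain z where z: "\<forall>y. L y = inner z y" using riesz[OF Ladd Lsc Lbd] by blast
  have "weak_conv (x \<circ> \<sigma>) z" unfolding weak_conv_def using Lt z by (simp add: o_def)
  thus ?thesis using mono by blast
qed

lemma norm_add_sq: "(norm (a + b))\<^sup>2 = (norm a)\<^sup>2 + (norm b)\<^sup>2 + 2 * inner a (b::'a::real_inner)"
  by (simp add: power2_norm_eq_inner inner_add_left inner_add_right inner_commute)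

lemma sq_to_zero:
  fixes g :: "nat \<Rightarrow> 'a::real_normed_vector"
  assumes "(\<lambda>n. (norm (g n))\<^sup>2) \<longlonglongrightarrow> 0"
  shows "g \<longlonglongrightarrow> 0"
proof -
  have "(\<lambda>n. sqrt ((norm (g n))\<^sup>2)) \<longlonglongrightarrow> sqrt 0" by (rule tendsto_real_sqrt[OF assms])
  hence "(\<lambda>n. norm (g n)) \<longlonglongrightarrow> 0" by simp
  thus ?thesis by (simp add: tendsto_norm_zero_iff)
qed

locale setting =
  fixes E :: "'a::{real_inner,complete_space} set"
    and f :: "'a \<Rightarrow> 'a \<Rightarrow> real"
    and S :: "'a \<Rightarrow> 'a"
    and lam gam b :: real
    and r beta :: "nat \<Rightarrow> real"
    and x u :: "nat \<Rightarrow> 'a"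
    and x0 :: 'a
  assumes E_ne: "E \<noteq> {}" and E_closed: "closed E" and E_convex: "convex E"
    and A1: "\<forall>z\<in>E. f z z = 0"
    and A2: "\<forall>z\<in>E. \<forall>y\<in>E. f z y + f y z \<le> 0"
    and A3: "\<forall>z\<in>E. \<forall>y\<in>E. \<forall>w\<in>E.
              Limsup (at_right 0) (\<lambda>t. ereal (f (t *\<^sub>R w + (1 - t) *\<^sub>R z) y)) \<le> ereal (f z y)"
    and A4: "\<forall>z\<in>E. convex_on E (f z) \<and> lsc_on E (f z)"
    and S_maps: "S ` E \<subseteq> E"
    and S_hyb: "gen_hybrid E lam gam S"
    and nonempty: "fixset E S \<inter> EP E f \<noteq> {}"
    and r_pos: "\<forall>n. r n > 0"
    and r_liminf: "liminf (\<lambda>n. ereal (r n)) > 0"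
    and b_range: "0 < b" "b < 1"
    and beta_range: "\<forall>n. b \<le> beta n \<and> beta n \<le> 1"
    and beta_liminf: "liminf (\<lambda>n. ereal (beta n * (1 - beta n))) > 0"
    and x0_in: "x0 \<in> E"
    and x_init: "x 0 = x0"
    and u_def: "\<forall>n. u n \<in> E \<and>
                  (\<forall>y\<in>E. f (u n) y + (1 / r n) * inner (y - u n) (u n - x n) \<ge> 0)"
    and x_rec: "\<forall>n. x (Suc n) = S ((1 - beta n) *\<^sub>R x n + beta n *\<^sub>R S (u n))"
begin

abbreviation "FF \<equiv> fixset E S \<inter> EP E f"

lemma SE: "y \<in> E \<Longrightarrow> S y \<in> E" using S_maps by blast

lemma quasi:
  assumes p: "p \<in> fixset E S" and y: "y \<in> E"
  shows "norm (S y - p) \<le> norm (y - p)"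
proof -
  have pE: "p \<in> E" and Sp: "S p = p" using p by (auto simp: fixset_def)
  have "lam * (norm (S p - S y))\<^sup>2 + (1 - lam) * (norm (p - S y))\<^sup>2
                 \<le> gam * (norm (S p - y))\<^sup>2 + (1 - gam) * (norm (p - y))\<^sup>2"
    using S_hyb pE y unfolding gen_hybrid_def by blast
  hence "lam * (norm (p - S y))\<^sup>2 + (1 - lam) * (norm (p - S y))\<^sup>2
                 \<le> gam * (norm (p - y))\<^sup>2 + (1 - gam) * (norm (p - y))\<^sup>2" by (simp add: Sp)
  hence "(norm (p - S y))\<^sup>2 \<le> (norm (p - y))\<^sup>2" by (simp add: algebra_simps)
  hence "norm (p - S y) \<le> norm (p - y)" by (rule power2_le_imp_le) simp
  thus ?thesis by (simp add: norm_minus_commute)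
qed

lemma fix_closed: "closed (fixset E S)"
  unfolding closed_sequential_limits
proof (intro allI impI, elim conjE)
  fix ps l assume ps: "\<forall>n. ps n \<in> fixset E S" "ps \<longlonglongrightarrow> l"
  have "\<forall>n. ps n \<in> E" using ps(1) by (auto simp: fixset_def)
  hence lE: "l \<in> E" using E_closed ps(2) closed_sequential_limits by blast
  have "(\<lambda>n. S l - ps n) \<longlonglongrightarrow> 0"
  proof (rule Lim_null_comparison[where g="\<lambda>n. norm (l - ps n)"])
    show "\<forall>\<^sub>F n in sequentially. norm (S l - ps n) \<le> norm (l - ps n)"
      using quasi ps(1) lE by (intro always_eventually) blast
    have "(\<lambda>n. l - ps n) \<longlonglongrightarrow> 0" using tendsto_diff[OF tendsto_const[of l] ps(2)] by simp
    thus "(\<lambda>n. norm (l - ps n)) \<longlonglongrightarrow> 0" by (simp add: tendsto_norm_zero)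
  qed
  hence "(\<lambda>n. S l - (S l - ps n)) \<longlonglongrightarrow> S l - 0" by (intro tendsto_diff tendsto_const)
  hence "ps \<longlonglongrightarrow> S l" by simp
  hence "S l = l" using ps(2) LIMSEQ_unique by blast
  thus "l \<in> fixset E S" using lE by (simp add: fixset_def)
qed

lemma fix_convex: "convex (fixset E S)"
  unfolding convex_def
proof (intro ballI allI impI)
  fix p q :: 'a and s t :: real
  assume p: "p \<in> fixset E S" and q: "q \<in> fixset E S" and st: "0 \<le> s" "0 \<le> t" "s + t = 1"
  define z where "z = s *\<^sub>R p + t *\<^sub>R q"
  have zE: "z \<in> E" using p q st E_convex by (auto simp: fixset_def z_def intro: convexD)
  have t1: "t = 1 - s" using st by simp
  have zp: "z - p = t *\<^sub>R (q - p)" by (simp add: z_def t1 algebra_simps)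
  have zq: "z - q = s *\<^sub>R (p - q)" by (simp add: z_def t1 algebra_simps)
  have h1: "(norm (S z - p))\<^sup>2 \<le> (t * norm (p - q))\<^sup>2"
  proof -
    have "norm (S z - p) \<le> t * norm (p - q)" using quasi[OF p zE] st by (simp add: zp norm_minus_commute)
    thus ?thesis by (intro power_mono) auto
  qed
  have h2: "(norm (S z - q))\<^sup>2 \<le> (s * norm (p - q))\<^sup>2"
  proof -
    have "norm (S z - q) \<le> s * norm (p - q)" using quasi[OF q zE] st by (simp add: zq)
    thus ?thesis by (intro power_mono) auto
  qed
  have "(norm (S z - z))\<^sup>2 = (norm (s *\<^sub>R (S z - p) + (1 - s) *\<^sub>R (S z - q)))\<^sup>2"
    by (simp add: z_def t1 algebra_simps)
  also have "\<dots> = s * (norm (S z - p))\<^sup>2 + (1 - s) * (norm (S z - q))\<^sup>2 - s * (1 - s) * (norm (q - p))\<^sup>2"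
    by (subst norm_comb_id) simp
  also have "\<dots> \<le> s * (t * norm (p - q))\<^sup>2 + (1 - s) * (s * norm (p - q))\<^sup>2 - s * (1 - s) * (norm (q - p))\<^sup>2"
    using h1 h2 st t1 by (intro diff_right_mono add_mono mult_left_mono) auto
  also have "\<dots> = 0" by (simp add: t1 power2_eq_square norm_minus_commute algebra_simps)
  finally have "S z = z" by simp
  thus "s *\<^sub>R p + t *\<^sub>R q \<in> fixset E S" using zE by (simp add: fixset_def z_def)
qed

lemma EP_imp: "p \<in> EP E f \<Longrightarrow> y \<in> E \<Longrightarrow> f y p \<le> 0"
  using A2 by (fastforce simp: EP_def)

lemma minty:
  assumes zE: "z \<in> E" and h: "\<forall>y\<in>E. f y z \<le> 0"
  shows "z \<in> EP E f"
  unfolding EP_def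
proof (intro CollectI conjI ballI zE)
  fix y assume yE: "y \<in> E"
  have pos: "f (t *\<^sub>R y + (1 - t) *\<^sub>R z) y \<ge> 0" if t: "0 < t" "t < 1" for t
  proof -
    define yt where "yt = t *\<^sub>R y + (1 - t) *\<^sub>R z"
    have ytE: "yt \<in> E" using yE zE t E_convex by (auto simp: yt_def intro: convexD)
    have cv: "convex_on E (f yt)" using A4 ytE by blast
    have "f yt yt \<le> t * f yt y + (1 - t) * f yt z"
      using cv yE zE t unfolding convex_on_def yt_def by auto
    moreover have "f yt yt = 0" using A1 ytE by blast
    moreover have "f yt z \<le> 0" using h ytE by blast
    ultimately have "0 \<le> t * f yt y" using t by (smt (verit) mult_nonneg_nonpos)
    thus ?thesis using t by (simp add: yt_def zero_le_mult_iff)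
  qed
  have ev: "\<forall>\<^sub>F t in at_right 0. ereal 0 \<le> ereal (f (t *\<^sub>R y + (1 - t) *\<^sub>R z) y)"
    unfolding eventually_at_right_field using pos by (intro exI[of _ 1]) auto
  have "ereal 0 \<le> Limsup (at_right 0) (\<lambda>t. ereal (f (t *\<^sub>R y + (1 - t) *\<^sub>R z) y))"
    by (rule le_Limsup[OF trivial_limit_at_right_real ev])
  also have "\<dots> \<le> ereal (f z y)" using A3 zE yE by blast
  finally show "0 \<le> f z y" by simp
qed

lemma EP_char: "EP E f = {z\<in>E. \<forall>y\<in>E. f y z \<le> 0}"
  using minty EP_imp by (auto simp: EP_def)

lemma subl_closed: assumes "y \<in> E" shows "closed {z\<in>E. f y z \<le> c}"
proof -
  have "openin (top_of_set E) {z\<in>E. c < f y z}" using A4 assms by (auto simp: lsc_on_def)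
  hence "closedin (top_of_set E) (E - {z\<in>E. c < f y z})" by (intro closedin_diff closedin_self)
  moreover have "E - {z\<in>E. c < f y z} = {z\<in>E. f y z \<le> c}" by auto
  ultimately show ?thesis using closedin_closed_trans E_closed by metis
qed

lemma subl_convex: assumes "y \<in> E" shows "convex {z\<in>E. f y z \<le> c}"
  unfolding convex_def
proof (intro ballI allI impI)
  fix p q :: 'a and s t :: real
  assume p: "p \<in> {z\<in>E. f y z \<le> c}" and q: "q \<in> {z\<in>E. f y z \<le> c}" and st: "0 \<le> s" "0 \<le> t" "s + t = 1"
  have cv: "convex_on E (f y)" using A4 assms by blast
  have inE: "s *\<^sub>R p + t *\<^sub>R q \<in> E" using p q st E_convex by (auto intro: convexD)
  have "f y (s *\<^sub>R p + t *\<^sub>R q) \<le> s * f y p + t * f y q" using cv p q st unfolding convex_on_def by blast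
  also have "\<dots> \<le> s * c + t * c" using p q st by (intro add_mono mult_left_mono) auto
  also have "\<dots> = c" using st by (simp add: distrib_right[symmetric])
  finally show "s *\<^sub>R p + t *\<^sub>R q \<in> {z\<in>E. f y z \<le> c}" using inE by simp
qed

lemma EP_eq: "EP E f = E \<inter> (\<Inter>y\<in>E. {z\<in>E. f y z \<le> 0})"
  by (auto simp: EP_char)

lemma EP_closed: "closed (EP E f)"
  unfolding EP_eq using subl_closed E_closed by (intro closed_Int closed_INT) auto

lemma EP_convex: "convex (EP E f)"
  unfolding EP_eq using subl_convex E_convex by (intro convex_Int convex_INT) auto

lemma FF_closed: "closed FF" using fix_closed EP_closed by blast
lemma FF_convex: "convex FF" using fix_convex EP_convex by (rule convex_Int)

end

context setting begin

definition yv where "yv n = (1 - beta n) *\<^sub>R x n + beta n *\<^sub>R S (u n)"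

lemma uE: "u n \<in> E" using u_def by blast

lemma beta01: "0 \<le> beta n" "beta n \<le> 1" using beta_range b_range by (auto intro: order_trans[of 0 b])

lemma xE: "x n \<in> E"
proof (induction n)
  case 0 show ?case using x0_in x_init by simp
next
  case (Suc n)
  have "yv n \<in> E" unfolding yv_def using Suc SE[OF uE] beta01 E_convex by (intro convexD) auto
  thus ?case using x_rec SE by (simp add: yv_def)
qed

lemma yvE: "yv n \<in> E" unfolding yv_def using xE SE[OF uE] beta01 E_convex by (intro convexD) auto

lemma firm:
  assumes p: "p \<in> EP E f"
  shows "(norm (u n - p))\<^sup>2 \<le> (norm (x n - p))\<^sup>2 - (norm (u n - x n))\<^sup>2"
proof -
  have pE: "p \<in> E" using p by (simp add: EP_def)
  have h: "f (u n) p + (1 / r n) * inner (p - u n) (u n - x n) \<ge> 0" using u_def pE by blast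
  have "f (u n) p \<le> 0" using EP_imp[OF p uE] .
  hence "(1 / r n) * inner (p - u n) (u n - x n) \<ge> 0" using h by linarith
  moreover have "0 < r n" using r_pos by blast
  ultimately have ip: "inner (p - u n) (u n - x n) \<ge> 0" by (auto simp: zero_le_divide_iff)
  have "x n - p = (x n - u n) + (u n - p)" by simp
  hence "(norm (x n - p))\<^sup>2 = (norm (x n - u n))\<^sup>2 + (norm (u n - p))\<^sup>2 + 2 * inner (x n - u n) (u n - p)"
    using norm_add_sq by metis
  moreover have "inner (x n - u n) (u n - p) = inner (p - u n) (u n - x n)"
    by (metis inner_commute inner_minus_left inner_minus_right minus_diff_eq)
  ultimately show ?thesis using ip by (simp add: norm_minus_commute)
qed

lemma key:
  assumes p: "p \<in> FF"
  shows "(norm (x (Suc n) - p))\<^sup>2 \<le> (norm (x n - p))\<^sup>2 - beta n * (norm (u n - x n))\<^sup>2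
            - beta n * (1 - beta n) * (norm (x n - S (u n)))\<^sup>2"
proof -
  have pF: "p \<in> fixset E S" and pEP: "p \<in> EP E f" using p by auto
  have "norm (x (Suc n) - p) \<le> norm (yv n - p)" using quasi[OF pF yvE] x_rec by (simp add: yv_def)
  hence 1: "(norm (x (Suc n) - p))\<^sup>2 \<le> (norm (yv n - p))\<^sup>2" by (intro power_mono) auto
  have e1: "yv n - p = beta n *\<^sub>R (S (u n) - p) + (1 - beta n) *\<^sub>R (x n - p)" by (simp add: yv_def algebra_simps)
  have e2: "norm ((S (u n) - p) - (x n - p)) = norm (x n - S (u n))"
    by (metis norm_minus_commute diff_diff_eq2 diff_add_cancel add_diff_cancel_right)
  have 2: "(norm (yv n - p))\<^sup>2 = beta n * (norm (S (u n) - p))\<^sup>2 + (1 - beta n) * (norm (x n - p))\<^sup>2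
      - beta n * (1 - beta n) * (norm (x n - S (u n)))\<^sup>2"
    unfolding e1 norm_comb_id e2 ..
  have 3: "(norm (S (u n) - p))\<^sup>2 \<le> (norm (u n - p))\<^sup>2" using quasi[OF pF uE] by (intro power_mono) auto
  have "beta n * (norm (S (u n) - p))\<^sup>2 \<le> beta n * ((norm (x n - p))\<^sup>2 - (norm (u n - x n))\<^sup>2)"
    using order_trans[OF 3 firm[OF pEP]] beta01 by (intro mult_left_mono) auto
  thus ?thesis using 1 2 by (simp add: algebra_simps)
qed

lemma dec: assumes "p \<in> FF" shows "norm (x (Suc n) - p) \<le> norm (x n - p)"
proof -
  have "0 \<le> beta n * (norm (u n - x n))\<^sup>2" "0 \<le> beta n * (1 - beta n) * (norm (x n - S (u n)))\<^sup>2"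
    using beta01 by auto
  hence "(norm (x (Suc n) - p))\<^sup>2 \<le> (norm (x n - p))\<^sup>2" using key[OF assms, of n] by linarith
  thus ?thesis by (rule power2_le_imp_le) simp
qed

lemma dec_le: assumes "p \<in> FF" "n \<le> m" shows "norm (x m - p) \<le> norm (x n - p)"
  using assms(2)
proof (induction m rule: dec_induct)
  case base then show ?case by simp
next
  case (step m) then show ?case using dec[OF assms(1), of m] by linarith
qed

definition p0 where "p0 = (SOME p. p \<in> FF)"
lemma p0: "p0 \<in> FF" using nonempty some_in_eq unfolding p0_def by blast

definition BB where "BB = norm (x 0 - p0) + norm p0"

lemma x_bd: "norm (x n) \<le> BB"
proof -
  have "norm (x n) \<le> norm p0 + norm (x n - p0)" by (rule norm_triangle_sub)
  thus ?thesis using dec_le[OF p0, of 0 n] by (simp add: BB_def)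
qed

lemma u_bd: "norm (u n) \<le> BB"
proof -
  have "(norm (u n - p0))\<^sup>2 \<le> (norm (x n - p0))\<^sup>2 - (norm (u n - x n))\<^sup>2" using firm[of p0 n] p0 by blast
  moreover have "0 \<le> (norm (u n - x n))\<^sup>2" by simp
  ultimately have "(norm (u n - p0))\<^sup>2 \<le> (norm (x n - p0))\<^sup>2" by linarith
  hence "norm (u n - p0) \<le> norm (x n - p0)" by (rule power2_le_imp_le) simp
  moreover have "norm (u n) \<le> norm p0 + norm (u n - p0)" by (rule norm_triangle_sub)
  ultimately show ?thesis using dec_le[OF p0, of 0 n] by (simp add: BB_def)
qed

lemma BB0: "0 \<le> BB" using x_bd[of 0] norm_ge_zero[of "x 0"] by linarith

definition aa where "aa n = (norm (x n - p0))\<^sup>2"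

lemma aa_diff: "(\<lambda>n. aa n - aa (Suc n)) \<longlonglongrightarrow> 0"
proof -
  have "decseq aa" unfolding aa_def using dec[OF p0] by (intro decseq_SucI power_mono) auto
  moreover have "\<forall>i. 0 \<le> aa i" by (simp add: aa_def)
  ultimately obtain L where L: "aa \<longlonglongrightarrow> L" using decseq_convergent by blast
  have "(\<lambda>n. aa n - aa (Suc n)) \<longlonglongrightarrow> L - L" using L LIMSEQ_Suc[OF L] by (intro tendsto_diff)
  thus ?thesis by simp
qed

lemma beta_c: "\<exists>c>0. eventually (\<lambda>n. c \<le> beta n * (1 - beta n)) sequentially"
proof -
  obtain c where c: "0 < ereal c" "ereal c < liminf (\<lambda>n. ereal (beta n * (1 - beta n)))"
    using ereal_dense2[OF beta_liminf] by blast
  from less_LiminfD[OF c(2)] have "eventually (\<lambda>n. ereal c < ereal (beta n * (1 - beta n))) sequentially" .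
  thus ?thesis using c(1) by (intro exI[of _ c]) (auto elim: eventually_mono)
qed

lemma r_c: "\<exists>c>0. eventually (\<lambda>n. c \<le> r n) sequentially"
proof -
  obtain c where c: "0 < ereal c" "ereal c < liminf (\<lambda>n. ereal (r n))"
    using ereal_dense2[OF r_liminf] by blast
  from less_LiminfD[OF c(2)] have "eventually (\<lambda>n. ereal c < ereal (r n)) sequentially" .
  thus ?thesis using c(1) by (intro exI[of _ c]) (auto elim: eventually_mono)
qed

lemma ux_to0: "(\<lambda>n. u n - x n) \<longlonglongrightarrow> 0"
proof (rule sq_to_zero, rule tendsto_sandwich[of "\<lambda>n. 0" _ _ "\<lambda>n. (aa n - aa (Suc n)) / b"])
  show "\<forall>\<^sub>F n in sequentially. 0 \<le> (norm (u n - x n))\<^sup>2" by simp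
  show "\<forall>\<^sub>F n in sequentially. (norm (u n - x n))\<^sup>2 \<le> (aa n - aa (Suc n)) / b"
  proof (intro always_eventually allI)
    fix n
    have "0 \<le> beta n * (1 - beta n) * (norm (x n - S (u n)))\<^sup>2" using beta01 by auto
    hence "beta n * (norm (u n - x n))\<^sup>2 \<le> aa n - aa (Suc n)" using key[OF p0, of n] by (simp add: aa_def)
    moreover have "b * (norm (u n - x n))\<^sup>2 \<le> beta n * (norm (u n - x n))\<^sup>2"
      using beta_range by (intro mult_right_mono) auto
    ultimately have "b * (norm (u n - x n))\<^sup>2 \<le> aa n - aa (Suc n)" by linarith
    thus "(norm (u n - x n))\<^sup>2 \<le> (aa n - aa (Suc n)) / b" using b_range by (simp add: field_simps)
  qed
  show "(\<lambda>n. (aa n - aa (Suc n)) / b) \<longlonglongrightarrow> 0" using tendsto_divide_zero[OF aa_diff] by simp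
qed simp

lemma xSu_to0: "(\<lambda>n. x n - S (u n)) \<longlonglongrightarrow> 0"
proof -
  obtain c where c: "c > 0" "eventually (\<lambda>n. c \<le> beta n * (1 - beta n)) sequentially" using beta_c by blast
  show ?thesis
  proof (rule sq_to_zero, rule tendsto_sandwich[of "\<lambda>n. 0" _ _ "\<lambda>n. (aa n - aa (Suc n)) / c"])
    show "\<forall>\<^sub>F n in sequentially. 0 \<le> (norm (x n - S (u n)))\<^sup>2" by simp
    show "\<forall>\<^sub>F n in sequentially. (norm (x n - S (u n)))\<^sup>2 \<le> (aa n - aa (Suc n)) / c"
      using c(2)
    proof (rule eventually_mono)
      fix n assume cn: "c \<le> beta n * (1 - beta n)"
      have "0 \<le> beta n * (norm (u n - x n))\<^sup>2" using beta01 by auto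
      hence "beta n * (1 - beta n) * (norm (x n - S (u n)))\<^sup>2 \<le> aa n - aa (Suc n)" using key[OF p0, of n] by (simp add: aa_def)
      moreover have "c * (norm (x n - S (u n)))\<^sup>2 \<le> beta n * (1 - beta n) * (norm (x n - S (u n)))\<^sup>2"
        using cn by (intro mult_right_mono) auto
      ultimately have "c * (norm (x n - S (u n)))\<^sup>2 \<le> aa n - aa (Suc n)" by linarith
      thus "(norm (x n - S (u n)))\<^sup>2 \<le> (aa n - aa (Suc n)) / c" using c(1) by (simp add: field_simps)
    qed
    show "(\<lambda>n. (aa n - aa (Suc n)) / c) \<longlonglongrightarrow> 0" using tendsto_divide_zero[OF aa_diff] by simp
  qed simp
qed

lemma uSu_to0: "(\<lambda>n. u n - S (u n)) \<longlonglongrightarrow> 0"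
  using tendsto_add[OF ux_to0 xSu_to0] by (simp add: algebra_simps)

end

lemma inner_null_bd:
  fixes e v :: "nat \<Rightarrow> 'a::real_inner"
  assumes "e \<longlonglongrightarrow> 0" "\<And>k. norm (v k) \<le> C"
  shows "(\<lambda>k. inner (e k) (v k)) \<longlonglongrightarrow> 0"
proof (rule Lim_null_comparison[where g="\<lambda>k. C * norm (e k)"])
  show "\<forall>\<^sub>F k in sequentially. norm (inner (e k) (v k)) \<le> C * norm (e k)"
  proof (intro always_eventually allI)
    fix k
    have "norm (inner (e k) (v k)) \<le> norm (e k) * norm (v k)" using Cauchy_Schwarz_ineq2 by simp
    also have "\<dots> \<le> norm (e k) * C" using assms(2) by (intro mult_left_mono) auto
    finally show "norm (inner (e k) (v k)) \<le> C * norm (e k)" by (simp add: mult.commute)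
  qed
  have "(\<lambda>k. norm (e k)) \<longlonglongrightarrow> 0" using assms(1) by (simp add: tendsto_norm_zero)
  thus "(\<lambda>k. C * norm (e k)) \<longlonglongrightarrow> 0" using tendsto_mult_right_zero by blast
qed

context setting begin

lemma demiclosed:
  assumes w: "\<And>k. w k \<in> E" "weak_conv w z" "\<And>k. norm (w k) \<le> M" "(\<lambda>k. S (w k) - w k) \<longlonglongrightarrow> 0"
    and zE: "z \<in> E"
  shows "S z = z"
proof -
  define e where "e k = S (w k) - w k" for k
  have "e = (\<lambda>k. S (w k) - w k)" by (rule ext) (simp add: e_def)
  hence e0: "e \<longlonglongrightarrow> 0" using w(4) by simp
  define X where "X k = 2 * inner (e k) (w k - S z) + (norm (e k))\<^sup>2" for k
  define Y where "Y k = 2 * inner (e k) (w k - z) + (norm (e k))\<^sup>2" for k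
  define g where "g k = gam * Y k - lam * X k - 2 * inner (w k - z) (z - S z)" for k
  have bound: "(norm (z - S z))\<^sup>2 \<le> g k" for k
  proof -
    define A where "A = (norm (w k - S z))\<^sup>2"
    define B where "B = (norm (w k - z))\<^sup>2"
    have hyb: "lam * (norm (S (w k) - S z))\<^sup>2 + (1 - lam) * (norm (w k - S z))\<^sup>2
       \<le> gam * (norm (S (w k) - z))\<^sup>2 + (1 - gam) * (norm (w k - z))\<^sup>2"
      using S_hyb w(1) zE unfolding gen_hybrid_def by blast
    have i1: "(norm (S (w k) - S z))\<^sup>2 = A + X k"
    proof -
      have eq: "S (w k) - S z = e k + (w k - S z)" by (simp add: e_def)
      have "(norm (S (w k) - S z))\<^sup>2 = (norm (e k))\<^sup>2 + (norm (w k - S z))\<^sup>2 + 2 * inner (e k) (w k - S z)"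
        unfolding eq by (rule norm_add_sq)
      thus ?thesis unfolding A_def X_def by linarith
    qed
    have i2: "(norm (S (w k) - z))\<^sup>2 = B + Y k"
    proof -
      have eq: "S (w k) - z = e k + (w k - z)" by (simp add: e_def)
      have "(norm (S (w k) - z))\<^sup>2 = (norm (e k))\<^sup>2 + (norm (w k - z))\<^sup>2 + 2 * inner (e k) (w k - z)"
        unfolding eq by (rule norm_add_sq)
      thus ?thesis unfolding B_def Y_def by linarith
    qed
    have i3: "A = B + (norm (z - S z))\<^sup>2 + 2 * inner (w k - z) (z - S z)"
    proof -
      have "w k - S z = (w k - z) + (z - S z)" by simp
      thus ?thesis unfolding A_def B_def by (metis norm_add_sq add.commute add.left_commute)
    qed
    have "lam * (A + X k) + (1 - lam) * A \<le> gam * (B + Y k) + (1 - gam) * B"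
      using hyb unfolding i1 i2 A_def[symmetric] B_def[symmetric] .
    moreover have "lam * (A + X k) + (1 - lam) * A = A + lam * X k" by (simp add: algebra_simps)
    moreover have "gam * (B + Y k) + (1 - gam) * B = B + gam * Y k" by (simp add: algebra_simps)
    ultimately have "A + lam * X k \<le> B + gam * Y k" by simp
    thus ?thesis unfolding g_def using i3 by linarith
  qed
  have nb: "norm (w k - v) \<le> M + norm v" for k v
    using norm_triangle_ineq4[of "w k" v] w(3)[of k] by linarith
  have lX: "X \<longlonglongrightarrow> 0"
  proof -
    have "(\<lambda>k. 2 * inner (e k) (w k - S z) + (norm (e k))\<^sup>2) \<longlonglongrightarrow> 2 * 0 + 0\<^sup>2"
      using inner_null_bd[OF e0 nb] e0 by (intro tendsto_intros) (auto simp: tendsto_norm_zero)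
    thus ?thesis by (simp add: X_def[abs_def])
  qed
  have lY: "Y \<longlonglongrightarrow> 0"
  proof -
    have "(\<lambda>k. 2 * inner (e k) (w k - z) + (norm (e k))\<^sup>2) \<longlonglongrightarrow> 2 * 0 + 0\<^sup>2"
      using inner_null_bd[OF e0 nb] e0 by (intro tendsto_intros) (auto simp: tendsto_norm_zero)
    thus ?thesis by (simp add: Y_def[abs_def])
  qed
  have lW: "(\<lambda>k. inner (w k - z) (z - S z)) \<longlonglongrightarrow> 0"
  proof -
    have "(\<lambda>k. inner (w k) (z - S z) - inner z (z - S z)) \<longlonglongrightarrow> inner z (z - S z) - inner z (z - S z)"
      using w(2) by (intro tendsto_diff tendsto_const) (auto simp: weak_conv_def)
    thus ?thesis by (simp add: inner_diff_left)
  qed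
  have "g \<longlonglongrightarrow> gam * 0 - lam * 0 - 2 * 0"
    unfolding g_def[abs_def] by (intro tendsto_diff tendsto_mult_left lX lY lW)
  hence "g \<longlonglongrightarrow> 0" by simp
  hence "(norm (z - S z))\<^sup>2 \<le> 0" using bound by (intro tendsto_lowerbound[of g]) auto
  thus ?thesis by simp
qed

lemma cluster:
  assumes \<sigma>: "strict_mono \<sigma>" and wz: "weak_conv (x \<circ> \<sigma>) z"
  shows "z \<in> FF"
proof -
  have uz: "weak_conv (u \<circ> \<sigma>) z"
  proof (rule weak_conv_add_null[OF wz])
    show "(\<lambda>n. (u \<circ> \<sigma>) n - (x \<circ> \<sigma>) n) \<longlonglongrightarrow> 0"
      using LIMSEQ_subseq_LIMSEQ[OF ux_to0 \<sigma>] by (simp add: o_def)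
  qed
  have zE: "z \<in> E" using weak_closed[OF E_closed E_convex uz] uE by (auto simp: o_def)
  have zF: "z \<in> fixset E S"
  proof -
    have "(\<lambda>k. S ((u \<circ> \<sigma>) k) - (u \<circ> \<sigma>) k) \<longlonglongrightarrow> - 0"
      using tendsto_minus[OF LIMSEQ_subseq_LIMSEQ[OF uSu_to0 \<sigma>]] by (simp add: o_def)
    hence "(\<lambda>k. S ((u \<circ> \<sigma>) k) - (u \<circ> \<sigma>) k) \<longlonglongrightarrow> 0" by simp
    from demiclosed[of "u \<circ> \<sigma>" z BB, OF _ uz _ this zE] uE u_bd have "S z = z" by auto
    thus ?thesis using zE by (simp add: fixset_def)
  qed
  have zEP: "z \<in> EP E f"
  proof (rule minty[OF zE], intro ballI)
    fix y assume yE: "y \<in> E"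
    obtain \<rho> where \<rho>: "\<rho> > 0" "eventually (\<lambda>n. \<rho> \<le> r n) sequentially" using r_c by blast
    define g where "g n = (1/\<rho>) * ((norm y + BB) * norm (u n - x n))" for n
    have g0: "g \<longlonglongrightarrow> 0"
    proof -
      have "(\<lambda>n. norm (u n - x n)) \<longlonglongrightarrow> 0" using ux_to0 by (simp add: tendsto_norm_zero)
      hence "(\<lambda>n. (1/\<rho>) * ((norm y + BB) * norm (u n - x n))) \<longlonglongrightarrow> (1/\<rho>) * ((norm y + BB) * 0)"
        by (intro tendsto_mult_left)
      moreover have "g = (\<lambda>n. (1/\<rho>) * ((norm y + BB) * norm (u n - x n)))" by (rule ext) (simp add: g_def)
      ultimately show ?thesis by simp
    qed
    have fy: "eventually (\<lambda>n. f y (u n) \<le> g n) sequentially"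
      using \<rho>(2)
    proof (rule eventually_mono)
      fix n assume rn: "\<rho> \<le> r n"
      have rpos: "r n > 0" using r_pos by blast
      have h: "f (u n) y + (1 / r n) * inner (y - u n) (u n - x n) \<ge> 0" using u_def yE by blast
      have a2: "f (u n) y + f y (u n) \<le> 0" using A2 uE yE by blast
      have "inner (y - u n) (u n - x n) \<le> norm (y - u n) * norm (u n - x n)"
        using Cauchy_Schwarz_ineq2[of "y - u n" "u n - x n"] by linarith
      also have "\<dots> \<le> (norm y + BB) * norm (u n - x n)"
      proof (rule mult_right_mono)
        show "norm (y - u n) \<le> norm y + BB" using norm_triangle_ineq4[of y "u n"] u_bd[of n] by linarith
      qed simp
      finally have ip: "inner (y - u n) (u n - x n) \<le> (norm y + BB) * norm (u n - x n)" .
      have "(1 / r n) * inner (y - u n) (u n - x n) \<le> (1 / r n) * ((norm y + BB) * norm (u n - x n))"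
        using ip rpos by (intro mult_left_mono) auto
      also have "\<dots> \<le> (1 / \<rho>) * ((norm y + BB) * norm (u n - x n))"
      proof (rule mult_right_mono)
        show "1 / r n \<le> 1 / \<rho>" using rn \<rho>(1) by (simp add: frac_le)
        show "0 \<le> (norm y + BB) * norm (u n - x n)" using BB0 by simp
      qed
      finally show "f y (u n) \<le> g n" using h a2 by (simp add: g_def)
    qed
    show "f y z \<le> 0"
    proof (rule field_le_epsilon)
      fix \<epsilon> :: real assume \<epsilon>: "\<epsilon> > 0"
      have "eventually (\<lambda>n. g n < \<epsilon>) sequentially" using order_tendstoD(2)[OF g0 \<epsilon>] .
      moreover note fy
      ultimately have "eventually (\<lambda>n. u n \<in> {w\<in>E. f y w \<le> \<epsilon>}) sequentially"
        by eventually_elim (use uE in force)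
      hence "eventually (\<lambda>k. (u \<circ> \<sigma>) k \<in> {w\<in>E. f y w \<le> \<epsilon>}) sequentially"
        using eventually_compose_filterlim[OF _ filterlim_subseq[OF \<sigma>]] by (simp add: o_def)
      from weak_closed[OF subl_closed[OF yE] subl_convex[OF yE] uz this]
      show "f y z \<le> 0 + \<epsilon>" by simp
    qed
  qed
  show ?thesis using zF zEP by blast
qed

end

context setting begin

lemma main: "\<exists>v \<in> FF. weak_conv x v \<and> (\<lambda>n. metric_proj FF (x n)) \<longlonglongrightarrow> v"
proof -
  define P where "P = metric_proj FF"
  have Pspec: "P q \<in> FF \<and> (\<forall>w\<in>FF. dist q (P q) \<le> dist q w)" for q
  proof -
    have "\<exists>p. p \<in> FF \<and> (\<forall>w\<in>FF. dist q p \<le> dist q w)"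
      using proj_exists[OF FF_closed FF_convex nonempty, of q] by blast
    thus ?thesis unfolding P_def metric_proj_def by (rule someI_ex)
  qed
  have PF: "P q \<in> FF" for q using Pspec by blast
  have Pmin: "w \<in> FF \<Longrightarrow> norm (q - P q) \<le> norm (q - w)" for q w using Pspec by (simp add: dist_norm)
  have Pvar: "w \<in> FF \<Longrightarrow> inner (q - P q) (w - P q) \<le> 0" for q w
    using proj_var[OF FF_convex PF] Pspec by blast
  define D where "D n = (norm (x n - P (x n)))\<^sup>2" for n
  have D0: "0 \<le> D n" for n by (simp add: D_def)
  have Pc: "(norm (P (x m) - P (x n)))\<^sup>2 \<le> D n - D m" if mn: "n \<le> m" for m n
  proof -
    have sp: "x m - P (x n) = (x m - P (x m)) + (P (x m) - P (x n))" by simp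
    have eq: "(norm (x m - P (x n)))\<^sup>2 = D m + (norm (P (x m) - P (x n)))\<^sup>2 + 2 * inner (x m - P (x m)) (P (x m) - P (x n))"
      unfolding sp D_def by (rule norm_add_sq)
    have "inner (x m - P (x m)) (P (x n) - P (x m)) \<le> 0" using Pvar[OF PF] .
    hence ip: "inner (x m - P (x m)) (P (x m) - P (x n)) \<ge> 0"
      by (simp add: inner_diff_right)
    have "norm (x m - P (x n)) \<le> norm (x n - P (x n))" using dec_le[OF PF mn] .
    hence "(norm (x m - P (x n)))\<^sup>2 \<le> D n" unfolding D_def by (intro power_mono) auto
    thus ?thesis using eq ip by linarith
  qed
  have Ddec: "decseq D"
  proof (rule decseq_SucI)
    fix n
    have "norm (x (Suc n) - P (x (Suc n))) \<le> norm (x (Suc n) - P (x n))" using Pmin[OF PF] .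
    also have "\<dots> \<le> norm (x n - P (x n))" using dec[OF PF] .
    finally show "D (Suc n) \<le> D n" unfolding D_def by (intro power_mono) auto
  qed
  obtain LD where LD: "D \<longlonglongrightarrow> LD" using decseq_convergent[OF Ddec, of 0] D0 by blast
  hence CD: "Cauchy D" using LIMSEQ_imp_Cauchy by blast
  have "Cauchy (\<lambda>n. P (x n))"
  proof (rule CauchyI)
    fix e :: real assume e: "e > 0"
    hence "e\<^sup>2 > 0" by simp
    then obtain N where N: "\<forall>m\<ge>N. \<forall>n\<ge>N. norm (D m - D n) < e\<^sup>2" using CD unfolding Cauchy_iff by blast
    show "\<exists>M. \<forall>m\<ge>M. \<forall>n\<ge>M. norm (P (x m) - P (x n)) < e"
    proof (intro exI allI impI)
      fix m n assume mn: "N \<le> m" "N \<le> n"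
      have "(norm (P (x m) - P (x n)))\<^sup>2 < e\<^sup>2"
      proof (cases "n \<le> m")
        case True
        have "(norm (P (x m) - P (x n)))\<^sup>2 \<le> D n - D m" using Pc[OF True] .
        moreover have "norm (D n - D m) < e\<^sup>2" using N mn by blast
        ultimately show ?thesis by simp
      next
        case False
        hence "m \<le> n" by simp
        have "(norm (P (x n) - P (x m)))\<^sup>2 \<le> D m - D n" using Pc[OF \<open>m \<le> n\<close>] .
        moreover have "norm (D m - D n) < e\<^sup>2" using N mn by blast
        ultimately show ?thesis by (simp add: norm_minus_commute)
      qed
      thus "norm (P (x m) - P (x n)) < e"
        by (rule power_less_imp_less_base) (use e in simp)
    qed
  qed
  then obtain v where Pv: "(\<lambda>n. P (x n)) \<longlonglongrightarrow> v" using Cauchy_convergent convergent_def by blast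
  have vF: "v \<in> FF" by (rule closed_sequentially[OF FF_closed _ Pv]) (use PF in blast)
  have wv: "weak_conv x v"
    unfolding weak_conv_def
  proof (rule allI, rule ccontr)
    fix y assume nc: "\<not> (\<lambda>n. inner (x n) y) \<longlonglongrightarrow> inner v y"
    then obtain \<epsilon> where \<epsilon>: "\<epsilon> > 0" "\<not> eventually (\<lambda>n. dist (inner (x n) y) (inner v y) < \<epsilon>) sequentially"
      unfolding tendsto_iff by blast
    hence "frequently (\<lambda>n. \<not> dist (inner (x n) y) (inner v y) < \<epsilon>) sequentially"
      by (simp add: not_eventually)
    hence "infinite {n. \<not> dist (inner (x n) y) (inner v y) < \<epsilon>}"
      by (simp add: frequently_cofinite[symmetric] cofinite_eq_sequentially)
    from infinite_enumerate[OF this] obtain \<sigma> :: "nat \<Rightarrow> nat" where \<sigma>0: "strict_mono \<sigma>"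
      "\<forall>n. \<sigma> n \<in> {n. \<not> dist (inner (x n) y) (inner v y) < \<epsilon>}" by blast
    have \<sigma>: "strict_mono \<sigma>" "\<And>n. \<epsilon> \<le> dist (inner (x (\<sigma> n)) y) (inner v y)"
      using \<sigma>0 by (auto simp: not_less)
    have "\<And>n. norm ((x \<circ> \<sigma>) n) \<le> BB" by (simp add: x_bd)
    from weak_compact[of "x \<circ> \<sigma>" BB, OF this] obtain \<rho> z where \<rho>: "strict_mono \<rho>" "weak_conv ((x \<circ> \<sigma>) \<circ> \<rho>) z"
      by blast
    define \<tau> where "\<tau> = \<sigma> \<circ> \<rho>"
    have \<tau>: "strict_mono \<tau>" using \<sigma>(1) \<rho>(1) by (simp add: \<tau>_def strict_mono_o)
    have wz: "weak_conv (x \<circ> \<tau>) z" using \<rho>(2) by (simp add: \<tau>_def o_assoc)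
    have zF: "z \<in> FF" using cluster[OF \<tau> wz] .
    have Pt: "(\<lambda>k. P (x (\<tau> k))) \<longlonglongrightarrow> v" using LIMSEQ_subseq_LIMSEQ[OF Pv \<tau>] by (simp add: o_def)
    have l1: "(\<lambda>k. inner ((x \<circ> \<tau>) k) (z - P (x (\<tau> k)))) \<longlonglongrightarrow> inner z (z - v)"
      using wz x_bd tendsto_diff[OF tendsto_const[of z] Pt] by (intro weak_conv_inner_strong) (auto simp: o_def)
    have l2: "(\<lambda>k. inner (P (x (\<tau> k))) (z - P (x (\<tau> k)))) \<longlonglongrightarrow> inner v (z - v)"
      using Pt by (intro tendsto_intros)
    have "(\<lambda>k. inner (x (\<tau> k) - P (x (\<tau> k))) (z - P (x (\<tau> k)))) \<longlonglongrightarrow> inner z (z - v) - inner v (z - v)"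
      using tendsto_diff[OF l1 l2] by (simp add: inner_diff_left o_def)
    hence "inner z (z - v) - inner v (z - v) \<le> 0"
      using Pvar[OF zF] by (intro tendsto_upperbound) auto
    hence "inner (z - v) (z - v) \<le> 0" by (simp add: inner_diff_left)
    hence zv: "z = v" by (metis inner_ge_zero order_antisym inner_eq_zero_iff right_minus_eq)
    have "(\<lambda>k. inner ((x \<circ> \<tau>) k) y) \<longlonglongrightarrow> inner v y" using wz zv by (simp add: weak_conv_def)
    hence "(\<lambda>k. dist (inner ((x \<circ> \<tau>) k) y) (inner v y)) \<longlonglongrightarrow> dist (inner v y) (inner v y)"
      by (intro tendsto_dist tendsto_const)
    hence "\<epsilon> \<le> 0" using \<sigma>(2) by (intro tendsto_lowerbound) (auto simp: \<tau>_def)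
    thus False using \<epsilon> by simp
  qed
  show ?thesis using vF wv Pv by (auto simp: P_def)
qed

end

theorem corollary3p3:
  fixes E :: "'a::{real_inner,complete_space} set"
    and f :: "'a \<Rightarrow> 'a \<Rightarrow> real"
    and S :: "'a \<Rightarrow> 'a"
    and lam gam b :: real
    and r beta :: "nat \<Rightarrow> real"
    and x u :: "nat \<Rightarrow> 'a"
    and x0 :: 'a
  assumes E_ne: "E \<noteq> {}" and E_closed: "closed E" and E_convex: "convex E"
    and A1: "\<forall>z\<in>E. f z z = 0"
    and A2: "\<forall>z\<in>E. \<forall>y\<in>E. f z y + f y z \<le> 0"
    and A3: "\<forall>z\<in>E. \<forall>y\<in>E. \<forall>w\<in>E.
              Limsup (at_right 0) (\<lambda>t. ereal (f (t *\<^sub>R w + (1 - t) *\<^sub>R z) y)) \<le> ereal (f z y)"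
    and A4: "\<forall>z\<in>E. convex_on E (f z) \<and> lsc_on E (f z)"
    and S_maps: "S ` E \<subseteq> E"
    and S_hyb: "gen_hybrid E lam gam S"
    and nonempty: "fixset E S \<inter> EP E f \<noteq> {}"
    and r_pos: "\<forall>n. r n > 0"
    and r_liminf: "liminf (\<lambda>n. ereal (r n)) > 0"
    and b_range: "0 < b" "b < 1"
    and beta_range: "\<forall>n. b \<le> beta n \<and> beta n \<le> 1"
    and beta_liminf: "liminf (\<lambda>n. ereal (beta n * (1 - beta n))) > 0"
    and x0_in: "x0 \<in> E"
    and x_init: "x 0 = x0"
    and u_def: "\<forall>n. u n \<in> E \<and>
                  (\<forall>y\<in>E. f (u n) y + (1 / r n) * inner (y - u n) (u n - x n) \<ge> 0)"
    and x_rec: "\<forall>n. x (Suc n) = S ((1 - beta n) *\<^sub>R x n + beta n *\<^sub>R S (u n))"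
  shows "\<exists>v \<in> fixset E S \<inter> EP E f. weak_conv x v \<and>
           (\<lambda>n. metric_proj (fixset E S \<inter> EP E f) (x n)) \<longlonglongrightarrow> v"
proof -
  interpret setting E f S lam gam b r beta x u x0
    by (unfold_locales) (fact assms)+
  show ?thesis by (rule main)
qed

end
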